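(* Let $F:\mathbb{R}^n\to\mathbb{R}$ be a finite PL function and let $M>0$ be such that $F(C)\subseteq[-M,M]$ for every flat cell $C$. Let $n_{\pm}$ be the number of connected components of $\{F\le\pm M\}$ and $n^{\pm}$ the number of connected components of $\{F\ge \pm M\}$. Then (i) $|n_- - n_+|\le \operatorname{rank} H_*(\{F\le M\},\{F\le -M\})$ (the coarse bounded sublevel $H$-complexity), and (ii) $|n^+ - n^-|\le \operatorname{rank} H_*(\{F\ge -M\},\{F\ge M\})$ (the coarse bounded superlevel $H$-complexity).
   Context: A finite PL function $F:\mathbb{R}^n\to\mathbb{R}$ is a continuous function that is affine-linear on each cell of some finite polyhedral complex $\mathcal{C}$ (finite collection of polyhedral sets, closed under taking faces, pairwise intersecting in common faces) with $|\mathcal{C}|=\mathbb{R}^n$; a cell is flat if $F$ is constant on it (all $0$-cells are flat). $\{F\le t\}=F^{-1}((-\infty,t])$, $\{F\ge t\}=F^{-1}([t,\infty))$. $H_*$ denotes singular homology with $\mathbb{Z}$ coefficients and $\operatorname{rank}H_*$ the sum over all degrees of the ranks. *)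

theory Defs
  imports "HOL-Analysis.Analysis" "HOL-Homology.Homology" "HOL-Library.Extended_Nat"
begin

definition polyhedral_complex :: "'a::euclidean_space set set \<Rightarrow> bool" where
  "polyhedral_complex \<C> \<longleftrightarrow>
     finite \<C> \<and>
     (\<forall>C\<in>\<C>. polyhedron C) \<and>
     (\<forall>C\<in>\<C>. \<forall>D. D face_of C \<longrightarrow> D \<in> \<C>) \<and>
     (\<forall>C\<in>\<C>. \<forall>D\<in>\<C>. (C \<inter> D) face_of C \<and> (C \<inter> D) face_of D)"

definition PL_wrt :: "('a::euclidean_space \<Rightarrow> real) \<Rightarrow> 'a set set \<Rightarrow> bool" where
  "PL_wrt F \<C> \<longleftrightarrow>
     polyhedral_complex \<C> \<and> \<Union>\<C> = UNIV \<and> continuous_on UNIV F \<and>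
     (\<forall>C\<in>\<C>. \<exists>a b. \<forall>x\<in>C. F x = a \<bullet> x + b)"

definition flat_cell :: "('a \<Rightarrow> real) \<Rightarrow> 'a set \<Rightarrow> bool" where
  "flat_cell F C \<longleftrightarrow> (\<exists>c. \<forall>x\<in>C. F x = c)"

definition Z_lin_indep :: "('g, 'b) monoid_scheme \<Rightarrow> 'g set \<Rightarrow> bool" where
  "Z_lin_indep G S \<longleftrightarrow> S \<subseteq> carrier G \<and> finite S \<and>
     (\<forall>c :: 'g \<Rightarrow> int. finprod G (\<lambda>x. x [^]\<^bsub>G\<^esub> c x) S = \<one>\<^bsub>G\<^esub> \<longrightarrow> (\<forall>x\<in>S. c x = 0))"

definition group_rank :: "('g, 'b) monoid_scheme \<Rightarrow> enat" where
  "group_rank G = Sup {enat (card S) | S. Z_lin_indep G S}"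

definition total_rel_hrank :: "'a topology \<Rightarrow> 'a set \<Rightarrow> enat" where
  "total_rel_hrank X S = (SUP k. \<Sum>p<k. group_rank (relative_homology_group (int p) X S))"

definition sublevel :: "('a \<Rightarrow> real) \<Rightarrow> real \<Rightarrow> 'a set" where
  "sublevel F t = {x. F x \<le> t}"

definition superlevel :: "('a \<Rightarrow> real) \<Rightarrow> real \<Rightarrow> 'a set" where
  "superlevel F t = {x. F x \<ge> t}"

end

theory Submission
  imports Defs
begin

lemma hom_finprod_comm:
  assumes G: "comm_group G" and H: "comm_group H" and h: "h \<in> hom G H"
    and fin: "finite E" and f: "f \<in> E \<rightarrow> carrier G"
  shows "h (finprod G f E) = finprod H (\<lambda>x. h (f x)) E"
  using fin f
proof (induction E rule: finite_induct)
  case empty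
  interpret G: comm_group G by (rule G)
  interpret H: comm_group H by (rule H)
  interpret gh: group_hom G H h by (simp add: group_hom_def group_hom_axioms_def h G.group_axioms H.group_axioms)
  show ?case by simp
next
  case (insert x E)
  interpret G: comm_group G by (rule G)
  interpret H: comm_group H by (rule H)
  have fx: "f x \<in> carrier G" and fE: "f \<in> E \<rightarrow> carrier G" using insert by auto
  have hf: "h \<circ> f \<in> E \<rightarrow> carrier H" "h (f x) \<in> carrier H"
    using fE fx h by (auto simp: hom_def)
  have "h (finprod G f (insert x E)) = h (f x \<otimes>\<^bsub>G\<^esub> finprod G f E)"
    using insert fx fE by (simp add: G.finprod_insert)
  also have "\<dots> = h (f x) \<otimes>\<^bsub>H\<^esub> h (finprod G f E)"
    using h fx fE by (simp add: hom_mult G.finprod_closed)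
  also have "\<dots> = finprod H (\<lambda>x. h (f x)) (insert x E)"
    using insert hf fE by (simp add: H.finprod_insert Pi_def)
  finally show ?case .
qed

lemma finprod_free_Abelian:
  assumes "finite E" "\<And>x. x \<in> E \<Longrightarrow> Poly_Mapping.keys (f x) \<subseteq> S"
  shows "finprod (free_Abelian_group S) f E = sum f E"
  using assms
proof (induction E rule: finite_induct)
  case empty
  then show ?case by (simp add: finprod_def)
next
  case (insert x E)
  interpret F: comm_group "free_Abelian_group S" by (rule abelian_free_Abelian_group)
  show ?case using insert
    by (subst F.finprod_insert) (auto simp: Pi_def)
qed

lemma carrier_rhg_obtain:
  assumes "T \<in> carrier (relative_homology_group (int p) X S)"
  shows "\<exists>c. T = homologous_rel_set p X S c \<and> singular_relcycle p X S c"
proof -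
  have "T \<in> (homologous_rel_set p X S) ` singular_relcycle_set p X S"
    using assms carrier_relative_homology_group[of p X S] by simp
  then show ?thesis by blast
qed

lemma rank_lower_bound:
  fixes L :: "'a chain \<Rightarrow> ('b \<Rightarrow>\<^sub>0 int)" and \<sigma> :: "'i \<Rightarrow> 'a chain"
  assumes Ladd: "\<And>a b. L (a + b) = L a + L b"
    and Lkill: "\<And>c. singular_relboundary p X S c \<Longrightarrow> L c = 0"
    and fin: "finite I"
    and cyc: "\<And>i. i \<in> I \<Longrightarrow> singular_relcycle p X S (\<sigma> i)"
    and ind: "\<And>c. (\<Sum>i\<in>I. frag_cmul (c i) (L (\<sigma> i))) = 0 \<Longrightarrow> \<forall>i\<in>I. c i = 0"
  shows "enat (card I) \<le> group_rank (relative_homology_group (int p) X S)"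
proof -
  let ?G = "relative_homology_group (int p) X S"
  let ?H = "free_Abelian_group (UNIV :: 'b set)"
  let ?cl = "\<lambda>i. homologous_rel_set p X S (\<sigma> i)"
  have Ldiff: "L (a - b) = L a - L b" for a b
    by (metis Ladd diff_add_cancel eq_diff_eq)
  define h where "h R = L (SOME r. r \<in> R)" for R
  have W: "h T = L t" if TG: "T \<in> carrier ?G" and tT: "t \<in> T" for T t
  proof -
    obtain c where c: "T = homologous_rel_set p X S c" "singular_relcycle p X S c"
      using carrier_rhg_obtain[OF TG] by blast
    have eq: "L r = L c" if "r \<in> T" for r
    proof -
      have "singular_relboundary p X S (c - r)" using that c by (simp add: homologous_rel_def)
      then have "L (c - r) = 0" by (rule Lkill)
      then show ?thesis using Ldiff by simp
    qed
    have "(SOME r. r \<in> T) \<in> T" using tT by (rule someI)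
    then show ?thesis unfolding h_def using eq tT by metis
  qed
  have Gg: "group ?G" by simp
  have Gc: "comm_group ?G" by simp
  have hom: "h \<in> hom ?G ?H"
  proof (rule homI)
    show "h x \<in> carrier ?H" for x by simp
    fix x y assume xy: "x \<in> carrier ?G" "y \<in> carrier ?G"
    obtain a where a: "x = homologous_rel_set p X S a"
      using carrier_rhg_obtain[OF xy(1)] by blast
    obtain b where b: "y = homologous_rel_set p X S b"
      using carrier_rhg_obtain[OF xy(2)] by blast
    have ax: "a \<in> x" and by': "b \<in> y" using a b by auto
    have "a + b \<in> x \<otimes>\<^bsub>?G\<^esub> y" using ax by' by (auto simp: mult_relative_homology_group)
    moreover have "x \<otimes>\<^bsub>?G\<^esub> y \<in> carrier ?G" using xy by (simp add: group.subgroup_self monoid.m_closed group.is_monoid)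
    ultimately have "h (x \<otimes>\<^bsub>?G\<^esub> y) = L (a + b)" using W by blast
    also have "\<dots> = h x + h y" using W xy ax by' Ladd by simp
    finally show "h (x \<otimes>\<^bsub>?G\<^esub> y) = h x \<otimes>\<^bsub>?H\<^esub> h y" by simp
  qed
  define E where "E = ?cl ` I"
  have clcar: "?cl i \<in> carrier ?G" if "i \<in> I" for i
    using cyc[OF that] carrier_relative_homology_group[of p X S] by auto
  have Ecar: "E \<subseteq> carrier ?G" using clcar by (auto simp: E_def)
  have hs: "h (?cl i) = L (\<sigma> i)" if "i \<in> I" for i
    using W[OF clcar[OF that]] by simp
  have inj: "inj_on ?cl I"
  proof (rule inj_onI)
    fix i j assume ij: "i \<in> I" "j \<in> I" and eq: "?cl i = ?cl j"
    then have Leq: "L (\<sigma> i) = L (\<sigma> j)" using hs by metis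
    show "i = j"
    proof (rule ccontr)
      assume ne: "i \<noteq> j"
      define c where "c k = (if k = i then 1 else if k = j then -1 else 0::int)" for k
      have tm: "frag_cmul (c k) (L (\<sigma> k)) = (if k = i then L (\<sigma> i) else 0) - (if k = j then L (\<sigma> j) else 0)" for k
        using ne by (auto simp: c_def)
      have "(\<Sum>k\<in>I. frag_cmul (c k) (L (\<sigma> k))) = L (\<sigma> i) - L (\<sigma> j)"
        unfolding tm sum_subtractf using ij fin by simp
      also have "\<dots> = 0" using Leq by simp
      finally have "c i = 0" using ind ij by blast
      then show False by (simp add: c_def)
    qed
  qed
  have indep: "Z_lin_indep ?G E"
    unfolding Z_lin_indep_def
  proof (intro conjI allI impI)
    show "E \<subseteq> carrier ?G" by (rule Ecar)
    show "finite E" using fin by (simp add: E_def)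
    fix c :: "'a chain set \<Rightarrow> int"
    assume prod: "finprod ?G (\<lambda>x. x [^]\<^bsub>?G\<^esub> c x) E = \<one>\<^bsub>?G\<^esub>"
    have "h (finprod ?G (\<lambda>x. x [^]\<^bsub>?G\<^esub> c x) E) = finprod ?H (\<lambda>x. h (x [^]\<^bsub>?G\<^esub> c x)) E"
      by (rule hom_finprod_comm[OF Gc abelian_free_Abelian_group hom])
         (use fin Ecar Gg group.int_pow_closed[OF Gg] in \<open>auto simp: E_def\<close>)
    also have "\<dots> = finprod ?H (\<lambda>x. frag_cmul (c x) (h x)) E"
    proof (rule comm_monoid.finprod_cong')
      show "comm_monoid ?H" using abelian_free_Abelian_group comm_group.axioms(1) by blast
    next
      fix x assume "x \<in> E"
      then show "h (x [^]\<^bsub>?G\<^esub> c x) = frag_cmul (c x) (h x)"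
        using hom_int_pow[OF hom _ Gg group_free_Abelian_group] Ecar by auto
    qed auto
    also have "\<dots> = (\<Sum>x\<in>E. frag_cmul (c x) (h x))"
      using fin by (intro finprod_free_Abelian) (auto simp: E_def)
    also have "\<dots> = (\<Sum>i\<in>I. frag_cmul (c (?cl i)) (L (\<sigma> i)))"
      unfolding E_def by (simp add: sum.reindex[OF inj] hs)
    finally have "(\<Sum>i\<in>I. frag_cmul (c (?cl i)) (L (\<sigma> i))) = 0"
      using prod group_hom.hom_one[of ?G ?H h] hom Gg
      by (simp add: group_hom_def group_hom_axioms_def)
    then have "\<forall>i\<in>I. c (?cl i) = 0" by (rule ind)
    then show "\<forall>x\<in>E. c x = 0" by (auto simp: E_def)
  qed
  have "card E = card I" unfolding E_def by (rule card_image[OF inj])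
  then show ?thesis
    unfolding group_rank_def using indep by (metis (mono_tags, lifting) Sup_upper mem_Collect_eq)
qed

definition pt0 :: "nat \<Rightarrow> real" where "pt0 = (\<lambda>j. if j = 0 then 1 else 0)"

lemma pt0_in: "pt0 \<in> standard_simplex 0"
  by (simp add: pt0_def standard_simplex_def)

lemma pc_eq_in_pathconn:
  assumes "path_connectedin X S" "u \<in> S" "v \<in> S"
  shows "path_component_of_set X u = path_component_of_set X v"
proof -
  have "S \<subseteq> path_component_of_set X u" by (rule path_component_of_maximal[OF assms(1,2)])
  then have "path_component_of X u v" using assms(3) by auto
  then show ?thesis using path_component_of_equiv by metis
qed

lemma pc_of_mem:
  assumes "C \<in> path_components_of X" "x \<in> C"
  shows "path_component_of_set X x = C"
proof -
  obtain y where y: "y \<in> topspace X" "C = path_component_of_set X y"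
    using assms(1) by (auto simp: path_components_of_def)
  then have "path_component_of X y x" using assms(2) by auto
  then show ?thesis using y path_component_of_equiv by metis
qed

lemma boundary_kill:
  assumes "singular_chain (Suc 0) Y d"
  shows "frag_extend (\<lambda>\<sigma>. G (path_component_of_set Y (\<sigma> pt0))) (chain_boundary (Suc 0) d) = 0"
  using assms unfolding singular_chain_def
proof (induction d rule: frag_induction)
  case zero
  then show ?case by simp
next
  case (one \<tau>)
  then have tau: "singular_simplex (Suc 0) Y \<tau>" by simp
  have cont: "continuous_map (subtopology (powertop_real UNIV) (standard_simplex (Suc 0))) Y \<tau>"
    using tau singular_simplex_def by auto
  have pc: "path_connectedin Y (\<tau> ` standard_simplex (Suc 0))"
    by (simp add: path_connectedin_subtopology path_connectedin_standard_simplex path_connectedin_continuous_map_image [OF cont])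
  have fk: "singular_face (Suc 0) k \<tau> pt0 \<in> \<tau> ` standard_simplex (Suc 0)" if "k \<le> Suc 0" for k
    using simplical_face_in_standard_simplex[of "Suc 0" k pt0] that pt0_in
    by (simp add: singular_face_def)
  have "chain_boundary (Suc 0) (frag_of \<tau>) = frag_of (singular_face (Suc 0) 0 \<tau>) - frag_of (singular_face (Suc 0) (Suc 0) \<tau>)"
    by (simp add: chain_boundary_of)
  moreover have "path_component_of_set Y (singular_face (Suc 0) 0 \<tau> pt0) = path_component_of_set Y (singular_face (Suc 0) (Suc 0) \<tau> pt0)"
    using pc_eq_in_pathconn[OF pc fk fk] by simp
  ultimately show ?case by (simp add: frag_extend_diff)
next
  case (diff a b)
  then show ?case by (simp add: chain_boundary_diff frag_extend_diff)
qed

lemma pc_sub_imp: "path_component_of (subtopology X S) x y \<Longrightarrow> path_component_of X x y"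
  unfolding path_component_of_def by (metis pathin_subtopology)

lemma simplex_pt0: "singular_simplex p Y \<sigma> \<Longrightarrow> p = 0 \<Longrightarrow> \<sigma> pt0 \<in> topspace Y"
  unfolding singular_simplex_def using pt0_in continuous_map_image_subset_topspace topspace_standard_simplex
  by fastforce

lemma const_simplex:
  assumes "x \<in> topspace X"
  shows "singular_simplex 0 X (restrict (\<lambda>_. x) (standard_simplex 0))"
  by (simp add: singular_simplex_def assms)

lemma const_simplex_pt0: "restrict (\<lambda>_. x) (standard_simplex 0) pt0 = x"
  using pt0_in by simp

lemma H0_bound:
  assumes finX: "finite (path_components_of X)" and finA: "finite (path_components_of (subtopology X A))"
  shows "enat (card (path_components_of X) - card (path_components_of (subtopology X A)))
         \<le> group_rank (relative_homology_group (int 0) X A)"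
proof -
  let ?PX = "path_components_of X"
  let ?PA = "path_components_of (subtopology X A)"
  define D where "D = {C \<in> ?PX. C \<inter> A = {}}"
  define M where "M = {C \<in> ?PX. C \<inter> A \<noteq> {}}"
  have Msub: "M \<subseteq> (\<lambda>B. path_component_of_set X (SOME b. b \<in> B)) ` ?PA"
  proof
    fix C assume "C \<in> M"
    then obtain a where C: "C \<in> ?PX" "a \<in> C" "a \<in> A" by (auto simp: M_def)
    have aX: "a \<in> topspace X" using C path_components_of_subset by blast
    define B where "B = path_component_of_set (subtopology X A) a"
    have BA: "B \<in> ?PA" using aX C(3) by (simp add: B_def path_component_in_path_components_of)
    have aB: "a \<in> B" using aX C(3) by (simp add: B_def path_component_of_refl)
    define s where "s = (SOME b. b \<in> B)"
    have sB: "s \<in> B" unfolding s_def using aB by (rule someI)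
    have "path_component_of (subtopology X A) a s" using sB unfolding B_def by simp
    then have "path_component_of X a s" by (rule pc_sub_imp)
    then have "path_component_of X a = path_component_of X s"
      by (rule conjunct2[OF conjunct2[OF path_component_of_equiv[THEN iffD1]]])
    then have "path_component_of_set X s = path_component_of_set X a" by (rule arg_cong[symmetric])
    also have "\<dots> = C" by (rule pc_of_mem[OF C(1) C(2)])
    finally have eqC: "path_component_of_set X (SOME b. b \<in> B) = C" unfolding s_def .
    show "C \<in> (\<lambda>B. path_component_of_set X (SOME b. b \<in> B)) ` ?PA"
      by (rule rev_image_eqI[OF BA]) (use eqC in simp)
  qed
  have "card M \<le> card ((\<lambda>B. path_component_of_set X (SOME b. b \<in> B)) ` ?PA)"
    by (rule card_mono[OF _ Msub]) (use finA in auto)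
  also have "\<dots> \<le> card ?PA" by (rule card_image_le[OF finA])
  finally have cM: "card M \<le> card ?PA" .
  have PXeq: "?PX = D \<union> M" by (auto simp: D_def M_def)
  have "card (D \<union> M) = card D + card M"
    by (rule card_Un_disjoint) (use finX in \<open>auto simp: D_def M_def\<close>)
  then have "card ?PX = card D + card M" using PXeq by simp
  then have cD: "card ?PX - card ?PA \<le> card D" using cM by linarith
  have finD: "finite D" using finX by (simp add: D_def)
  define x where "x C = (SOME x. x \<in> C)" for C :: "'a set"
  have xC: "x C \<in> C" if "C \<in> ?PX" for C
    unfolding x_def using nonempty_path_components_of[OF that] by (simp add: some_in_eq)
  have xX: "x C \<in> topspace X" if "C \<in> ?PX" for C
    using xC[OF that] path_components_of_subset[OF that] by blast
  define \<sigma> where "\<sigma> C = frag_of (restrict (\<lambda>_. x C) (standard_simplex 0))" for C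
  define G where "G C = (if C \<inter> A = {} then frag_of C else 0)" for C :: "'a set"
  define L where "L = frag_extend (\<lambda>\<tau>. G (path_component_of_set X (\<tau> pt0)))"
  have "enat (card D) \<le> group_rank (relative_homology_group (int 0) X A)"
  proof (rule rank_lower_bound[where L = L and \<sigma> = \<sigma>])
    show "L (a + b) = L a + L b" for a b by (simp add: L_def frag_extend_add)
    show "finite D" by (rule finD)
    show "singular_relcycle 0 X A (\<sigma> C)" if "C \<in> D" for C
    proof -
      have "C \<in> ?PX" using that by (simp add: D_def)
      then have "singular_simplex 0 X (restrict (\<lambda>_. x C) (standard_simplex 0))" by (rule const_simplex[OF xX])
      then show ?thesis by (simp add: \<sigma>_def singular_relcycle singular_chain_of chain_boundary_def)
    qed
    show "L c = 0" if rb: "singular_relboundary 0 X A c" for c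
    proof -
      obtain d e where de: "singular_chain (Suc 0) X d" "singular_chain 0 (subtopology X A) e"
        "chain_boundary (Suc 0) d = c + e"
        using rb unfolding singular_relboundary_alt by blast
      have "c = chain_boundary (Suc 0) d - e" using de(3) by simp
      moreover have "L (chain_boundary (Suc 0) d) = 0" unfolding L_def by (rule boundary_kill[OF de(1)])
      moreover have "L e = 0" unfolding L_def
      proof (rule frag_extend_eq_0)
        fix \<tau> assume "\<tau> \<in> Poly_Mapping.keys e"
        then have "singular_simplex 0 (subtopology X A) \<tau>" using de(2) by (auto simp: singular_chain_def)
        then have "\<tau> pt0 \<in> topspace (subtopology X A)" by (rule simplex_pt0) simp
        then have t: "\<tau> pt0 \<in> topspace X" "\<tau> pt0 \<in> A" by simp_all
        then have "\<tau> pt0 \<in> path_component_of_set X (\<tau> pt0) \<inter> A" by (simp add: path_component_of_refl)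
        then have "path_component_of_set X (\<tau> pt0) \<inter> A \<noteq> {}" by blast
        then show "G (path_component_of_set X (\<tau> pt0)) = 0" by (simp add: G_def)
      qed
      ultimately show ?thesis by (simp add: L_def frag_extend_diff)
    qed
    have Lval: "L (\<sigma> C) = frag_of C" if "C \<in> D" for C
    proof -
      have "C \<in> ?PX" "C \<inter> A = {}" using that by (auto simp: D_def)
      then show ?thesis
        using pc_of_mem[of C X "x C"] xC const_simplex_pt0
        by (simp add: L_def \<sigma>_def G_def pt0_in)
    qed
    show "\<forall>C\<in>D. c C = 0" if "(\<Sum>C\<in>D. frag_cmul (c C) (L (\<sigma> C))) = 0" for c
    proof
      fix C0 assume C0: "C0 \<in> D"
      have "(\<Sum>C\<in>D. frag_cmul (c C) (L (\<sigma> C))) = (\<Sum>C\<in>D. frag_cmul (c C) (frag_of C))"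
        by (rule sum.cong[OF refl]) (simp add: Lval)
      then have "(\<Sum>C\<in>D. frag_cmul (c C) (frag_of C)) = 0" using that by simp
      then have "Poly_Mapping.lookup (\<Sum>C\<in>D. frag_cmul (c C) (frag_of C)) C0 = 0" by simp
      then have "(\<Sum>C\<in>D. c C * (if C0 = C then 1 else 0)) = 0" by (simp add: lookup_sum)
      moreover have "(\<Sum>C\<in>D. c C * (if C0 = C then 1 else 0)) = c C0"
        using C0 finD by (simp add: if_distrib[of "\<lambda>t. c _ * t"] cong: if_cong)
      ultimately show "c C0 = 0" by simp
    qed
  qed
  moreover have "enat (card ?PX - card ?PA) \<le> enat (card D)" using cD by simp
  ultimately show ?thesis by (rule order_trans[rotated])
qed

abbreviation cs :: "'a \<Rightarrow> (nat \<Rightarrow> real) \<Rightarrow> 'a" where "cs x \<equiv> restrict (\<lambda>_. x) (standard_simplex 0)"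

lemma path_chain:
  assumes "path_component_of X u v"
  shows "\<exists>d. singular_chain (Suc 0) X d \<and> chain_boundary (Suc 0) d = frag_of (cs u) - frag_of (cs v)"
proof -
  define K where "K = path_component_of_set X u"
  have uX: "u \<in> topspace X" and vX: "v \<in> topspace X"
    using path_component_of_equiv[THEN iffD1, OF assms] by simp_all
  have uK: "u \<in> K" using uX by (simp add: K_def path_component_of_refl)
  have vK: "v \<in> K" using assms by (simp add: K_def)
  have pcK: "path_connectedin X K" by (simp add: K_def path_connectedin_path_component_of)
  then have pcs: "path_connected_space (subtopology X K)" by (simp add: path_connectedin_def)
  have s1: "singular_simplex 0 (subtopology X K) (cs u)" using uX uK by (intro const_simplex) simp
  have s2: "singular_simplex 0 (subtopology X K) (cs v)" using vX vK by (intro const_simplex) simp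
  have "homologous_rel 0 (subtopology X K) {} (frag_of (cs u)) (frag_of (cs v))"
    by (rule iso_integer_zeroth_homology_group_aux[OF pcs s1 s2])
  then have "singular_relboundary 0 (subtopology X K) {} (frag_of (cs u) - frag_of (cs v))"
    by (simp add: homologous_rel_def)
  then obtain d e where de: "singular_chain (Suc 0) (subtopology X K) d"
      "singular_chain 0 (subtopology (subtopology X K) {}) e"
      "chain_boundary (Suc 0) d = (frag_of (cs u) - frag_of (cs v)) + e"
    using singular_relboundary_alt by blast
  have "e = 0" using de(2) by (simp add: singular_chain_empty)
  moreover have "singular_chain (Suc 0) X d" using de(1) singular_chain_subtopology by blast
  ultimately show ?thesis using de(3) by auto
qed

lemma H1_bound:
  assumes finX: "finite (path_components_of X)" and finA: "finite (path_components_of (subtopology X A))"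
  shows "enat (card (path_components_of (subtopology X A)) - card (path_components_of X))
         \<le> group_rank (relative_homology_group (int 1) X A)"
proof -
  let ?PX = "path_components_of X"
  let ?PA = "path_components_of (subtopology X A)"
  define pB where "pB B = (SOME b. b \<in> B)" for B :: "'a set"
  have pBB: "pB B \<in> B" if "B \<in> ?PA" for B
    unfolding pB_def using nonempty_path_components_of[OF that] by (simp add: some_in_eq)
  have pBA: "pB B \<in> topspace X" "pB B \<in> A" if "B \<in> ?PA" for B
    using pBB[OF that] path_components_of_subset[OF that] by auto
  define K where "K B = path_component_of_set X (pB B)" for B
  define R where "R B = (SOME B'. B' \<in> ?PA \<and> K B' = K B)" for B
  have RB: "R B \<in> ?PA \<and> K (R B) = K B" if "B \<in> ?PA" for B
    unfolding R_def by (rule someI[of _ B]) (use that in simp)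
  have RR: "R (R B) = R B" if "B \<in> ?PA" for B
    using RB[OF that] by (simp add: R_def)
  define I where "I = {B \<in> ?PA. B \<noteq> R B}"
  have RnI: "R B \<notin> I" if "B \<in> ?PA" for B
    using RR[OF that] by (simp add: I_def)
  have finI: "finite I" using finA by (simp add: I_def)
  have KPX: "K ` ?PA \<subseteq> ?PX" using pBA by (auto simp: K_def path_component_in_path_components_of)
  have RK: "R B = R B'" if "K B = K B'" for B B' by (simp add: R_def that)
  have "?PA - I \<subseteq> (\<lambda>k. SOME B'. B' \<in> ?PA \<and> K B' = k) ` (K ` ?PA)"
  proof
    fix B assume B: "B \<in> ?PA - I"
    then have "B = R B" by (simp add: I_def)
    then have "B = (\<lambda>k. SOME B'. B' \<in> ?PA \<and> K B' = k) (K B)" by (simp add: R_def)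
    moreover have "K B \<in> K ` ?PA" using B by blast
    ultimately show "B \<in> (\<lambda>k. SOME B'. B' \<in> ?PA \<and> K B' = k) ` (K ` ?PA)" by (rule image_eqI)
  qed
  then have "card (?PA - I) \<le> card ((\<lambda>k. SOME B'. B' \<in> ?PA \<and> K B' = k) ` (K ` ?PA))"
    by (rule card_mono[rotated]) (use finA in auto)
  also have "\<dots> \<le> card (K ` ?PA)" by (rule card_image_le) (use finA in auto)
  also have "\<dots> \<le> card ?PX" by (rule card_mono[OF finX KPX])
  finally have c1: "card (?PA - I) \<le> card ?PX" .
  have IPA: "I \<subseteq> ?PA" by (auto simp: I_def)
  have "card (?PA - I) = card ?PA - card I" by (rule card_Diff_subset[OF finI IPA])
  moreover have "card I \<le> card ?PA" by (rule card_mono[OF finA IPA])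
  ultimately have "card ?PA = card I + card (?PA - I)" by simp
  then have cI: "card ?PA - card ?PX \<le> card I" using c1 by linarith
  have sameK: "path_component_of X (pB B) (pB (R B))" if BI: "B \<in> I" for B
  proof -
    have B: "B \<in> ?PA" using BI unfolding I_def by blast
    have KR: "K (R B) = K B" using RB[OF B] by (rule conjunct2)
    have rX: "pB (R B) \<in> topspace X" by (rule pBA(1)[OF conjunct1[OF RB[OF B]]])
    have "path_component_of X (pB (R B)) (pB (R B))" using rX by (simp only: path_component_of_refl)
    then have "pB (R B) \<in> K (R B)" unfolding K_def by (simp only: mem_Collect_eq)
    then have "pB (R B) \<in> K B" by (simp only: KR)
    then show ?thesis unfolding K_def by (simp only: mem_Collect_eq)
  qed
  have "\<forall>B\<in>I. \<exists>d. singular_chain (Suc 0) X d \<and> chain_boundary (Suc 0) d = frag_of (cs (pB B)) - frag_of (cs (pB (R B)))"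
  proof (rule ballI)
    fix B assume "B \<in> I"
    show "\<exists>d. singular_chain (Suc 0) X d \<and> chain_boundary (Suc 0) d = frag_of (cs (pB B)) - frag_of (cs (pB (R B)))"
      by (rule path_chain[OF sameK[OF \<open>B \<in> I\<close>]])
  qed
  from bchoice[OF this] obtain \<sigma> where \<sigma>': "\<forall>B\<in>I. singular_chain (Suc 0) X (\<sigma> B) \<and> chain_boundary (Suc 0) (\<sigma> B) = frag_of (cs (pB B)) - frag_of (cs (pB (R B)))"
    by (elim exE) (erule that)
  have \<sigma>: "singular_chain (Suc 0) X (\<sigma> B) \<and> chain_boundary (Suc 0) (\<sigma> B) = frag_of (cs (pB B)) - frag_of (cs (pB (R B)))"
    if "B \<in> I" for B using bspec[OF \<sigma>' that] .
  define L where "L c = frag_extend (\<lambda>\<tau>. frag_of (path_component_of_set (subtopology X A) (\<tau> pt0))) (chain_boundary (Suc 0) c)" for c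
  have main: "enat (card I) \<le> group_rank (relative_homology_group (int (Suc 0)) X A)"
  proof (rule rank_lower_bound[where L = L and \<sigma> = \<sigma>])
    show "L (a + b) = L a + L b" for a b by (simp add: L_def frag_extend_add chain_boundary_add)
    show "finite I" by (rule finI)
    show "singular_relcycle (Suc 0) X A (\<sigma> B)" if "B \<in> I" for B
    proof -
      have B: "B \<in> ?PA" "R B \<in> ?PA" using that RB by (auto simp: I_def)
      have "singular_chain 0 (subtopology X A) (frag_of (cs (pB B)) - frag_of (cs (pB (R B))))"
      proof (rule singular_chain_diff)
        have s1: "singular_simplex 0 (subtopology X A) (cs (pB B))"
          by (rule const_simplex) (use pBA[OF B(1)] in simp)
        have s2: "singular_simplex 0 (subtopology X A) (cs (pB (R B)))"
          by (rule const_simplex) (use pBA[OF B(2)] in simp)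
        show "singular_chain 0 (subtopology X A) (frag_of (cs (pB B)))" by (simp add: singular_chain_of s1)
        show "singular_chain 0 (subtopology X A) (frag_of (cs (pB (R B))))" by (simp add: singular_chain_of s2)
      qed
      then show ?thesis using \<sigma>[OF that] by (simp add: singular_relcycle)
    qed
    show "L c = 0" if rb: "singular_relboundary (Suc 0) X A c" for c
    proof -
      obtain d e where de: "singular_chain (Suc (Suc 0)) X d" "singular_chain (Suc 0) (subtopology X A) e"
        "chain_boundary (Suc (Suc 0)) d = c + e"
        using rb unfolding singular_relboundary_alt by blast
      have "c = chain_boundary (Suc (Suc 0)) d - e" using de(3) by simp
      then have "chain_boundary (Suc 0) c = - chain_boundary (Suc 0) e"
        using chain_boundary_boundary[OF de(1)] by (simp add: chain_boundary_diff)
      then show ?thesis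
        using boundary_kill[OF de(2), of frag_of] by (simp add: L_def frag_extend_minus)
    qed
    have Lval: "L (\<sigma> B) = frag_of B - frag_of (R B)" if "B \<in> I" for B
    proof -
      have B: "B \<in> ?PA" "R B \<in> ?PA" using that RB by (auto simp: I_def)
      have e1: "path_component_of_set (subtopology X A) (pB B) = B"
        by (rule pc_of_mem[OF B(1) pBB[OF B(1)]])
      have e2: "path_component_of_set (subtopology X A) (pB (R B)) = R B"
        by (rule pc_of_mem[OF B(2) pBB[OF B(2)]])
      have bd: "chain_boundary (Suc 0) (\<sigma> B) = frag_of (cs (pB B)) - frag_of (cs (pB (R B)))"
        using \<sigma>[OF that] by (rule conjunct2)
      show ?thesis unfolding L_def bd
        by (simp only: frag_extend_diff frag_extend_of const_simplex_pt0 e1 e2)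
    qed
    show "\<forall>B\<in>I. c B = 0" if "(\<Sum>B\<in>I. frag_cmul (c B) (L (\<sigma> B))) = 0" for c
    proof
      fix B0 assume B0: "B0 \<in> I"
      have "(\<Sum>B\<in>I. frag_cmul (c B) (L (\<sigma> B))) = (\<Sum>B\<in>I. frag_cmul (c B) (frag_of B - frag_of (R B)))"
        by (rule sum.cong[OF refl]) (simp add: Lval)
      then have "(\<Sum>B\<in>I. frag_cmul (c B) (frag_of B - frag_of (R B))) = 0" using that by simp
      then have "Poly_Mapping.lookup (\<Sum>B\<in>I. frag_cmul (c B) (frag_of B - frag_of (R B))) B0 = 0" by simp
      moreover have "Poly_Mapping.lookup (frag_cmul (c B) (frag_of B - frag_of (R B))) B0 = (if B = B0 then c B else 0)"
        if "B \<in> I" for B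
      proof -
        have "R B \<noteq> B0" using RnI B0 that by (auto simp: I_def)
        then show ?thesis by (auto simp: lookup_minus)
      qed
      ultimately have "(\<Sum>B\<in>I. (if B = B0 then c B else 0)) = 0"
        by (simp add: lookup_sum)
      then show "c B0 = 0" using B0 finI by simp
    qed
  qed
  have m1: "enat (card I) \<le> group_rank (relative_homology_group (int 1) X A)" using main by simp
  have "enat (card ?PA - card ?PX) \<le> enat (card I)" using cI by simp
  then show ?thesis using m1 by (rule order_trans)
qed

lemma union_convex_components:
  fixes \<P> :: "'a::euclidean_space set set"
  assumes fin: "finite \<P>" and cc: "\<And>Q. Q \<in> \<P> \<Longrightarrow> convex Q \<and> closed Q"
  shows "components (\<Union>\<P>) = path_components_of (top_of_set (\<Union>\<P>))
         \<and> finite (path_components_of (top_of_set (\<Union>\<P>)))"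
proof -
  let ?U = "\<Union>\<P>"
  have pct: "path_components_of (top_of_set ?U) = (\<lambda>x. path_component_set ?U x) ` ?U"
  proof -
    have e: "\<And>a. path_component_of (top_of_set ?U) a = path_component ?U a" by (rule ext) simp
    show ?thesis unfolding path_components_of_def e by simp
  qed
  have piece: "Q \<subseteq> path_component_set ?U y" if "Q \<in> \<P>" "y \<in> Q" for Q y
    using path_component_maximal[OF that(2) convex_imp_path_connected] cc that by blast
  have sameP: "Q \<subseteq> path_component_set ?U x" if QP: "Q \<in> \<P>" and ne: "Q \<inter> path_component_set ?U x \<noteq> {}" for Q x
  proof -
    obtain y where y: "y \<in> Q" "y \<in> path_component_set ?U x" using ne by blast
    then have "path_component_set ?U y = path_component_set ?U x" using path_component_eq[OF y(2)] by simp
    then show ?thesis using piece[OF QP y(1)] by simp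
  qed
  have eqc: "connected_component_set ?U x = path_component_set ?U x" if xU: "x \<in> ?U" for x
  proof
    show "path_component_set ?U x \<subseteq> connected_component_set ?U x"
      by (rule path_component_subset_connected_component)
    let ?P = "path_component_set ?U x"
    let ?C = "connected_component_set ?U x"
    define N where "N = \<Union>{Q\<in>\<P>. Q \<inter> ?P = {}}"
    have Peq: "?P = \<Union>{Q\<in>\<P>. Q \<inter> ?P \<noteq> {}}"
    proof
      show "?P \<subseteq> \<Union>{Q\<in>\<P>. Q \<inter> ?P \<noteq> {}}"
      proof
        fix z assume z: "z \<in> ?P"
        then have "z \<in> ?U" using path_component_subset by blast
        then obtain Q where "Q \<in> \<P>" "z \<in> Q" by blast
        then show "z \<in> \<Union>{Q\<in>\<P>. Q \<inter> ?P \<noteq> {}}" using z by blast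
      qed
      show "\<Union>{Q\<in>\<P>. Q \<inter> ?P \<noteq> {}} \<subseteq> ?P" using sameP by blast
    qed
    have clP: "closed ?P"
      by (subst Peq) (rule closed_Union; use fin cc in auto)
    have clN: "closed N" unfolding N_def by (rule closed_Union; use fin cc in auto)
    have cover: "?C \<subseteq> ?P \<union> N"
    proof
      fix z assume "z \<in> ?C"
      then have "z \<in> ?U" using connected_component_subset by blast
      then obtain Q where Q: "Q \<in> \<P>" "z \<in> Q" by blast
      show "z \<in> ?P \<union> N"
      proof (cases "Q \<inter> ?P = {}")
        case True then show ?thesis using Q by (auto simp: N_def)
      next
        case False then show ?thesis using sameP[OF Q(1)] Q(2) by blast
      qed
    qed
    have disj: "?P \<inter> N \<inter> ?C = {}" by (auto simp: N_def)
    have xP: "x \<in> ?P" using xU by (simp add: path_component_refl)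
    have xC: "x \<in> ?C" using xU by simp
    have "connected ?C" by simp
    then have "\<not> (N \<inter> ?C \<noteq> {})"
      using connected_closed[of ?C] clP clN cover disj xP xC by blast
    then show "?C \<subseteq> ?P" using cover by blast
  qed
  have comp: "components ?U = path_components_of (top_of_set ?U)"
    unfolding components_def pct using eqc by (rule image_cong[OF refl])
  have "(\<lambda>x. path_component_set ?U x) ` ?U \<subseteq> (\<lambda>Q. path_component_set ?U (SOME q. q \<in> Q)) ` \<P>"
  proof
    fix S assume "S \<in> (\<lambda>x. path_component_set ?U x) ` ?U"
    then obtain x Q where x: "S = path_component_set ?U x" "Q \<in> \<P>" "x \<in> Q" by blast
    have q: "(SOME q. q \<in> Q) \<in> Q" using x(3) by (rule someI)
    have "x \<in> path_component_set ?U (SOME q. q \<in> Q)" using piece[OF x(2) q] x(3) by blast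
    then have "path_component_set ?U x = path_component_set ?U (SOME q. q \<in> Q)"
      by (rule path_component_eq)
    then show "S \<in> (\<lambda>Q. path_component_set ?U (SOME q. q \<in> Q)) ` \<P>" using x by blast
  qed
  then have "finite (path_components_of (top_of_set ?U))"
    unfolding pct using fin finite_subset by blast
  with comp show ?thesis by simp
qed

lemma sub_union:
  fixes G :: "'a::euclidean_space \<Rightarrow> real"
  assumes fin: "finite \<C>" and poly: "\<forall>C\<in>\<C>. polyhedron C" and cov: "\<Union>\<C> = UNIV"
    and ab: "\<forall>C\<in>\<C>. \<forall>x\<in>C. G x = a C \<bullet> x + b C"
  shows "\<exists>\<P>. finite \<P> \<and> (\<forall>Q\<in>\<P>. convex Q \<and> closed Q) \<and> sublevel G t = \<Union>\<P>"
proof (intro exI conjI)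
  let ?P = "(\<lambda>C. C \<inter> {x. a C \<bullet> x \<le> t - b C}) ` \<C>"
  show "finite ?P" using fin by simp
  show "\<forall>Q\<in>?P. convex Q \<and> closed Q"
  proof
    fix Q assume "Q \<in> ?P"
    then obtain C where C: "C \<in> \<C>" "Q = C \<inter> {x. a C \<bullet> x \<le> t - b C}" by blast
    have "convex C" "closed C" using poly C(1) polyhedron_imp_convex polyhedron_imp_closed by auto
    then show "convex Q \<and> closed Q"
      using C(2) convex_Int[OF _ convex_halfspace_le] closed_Int[OF _ closed_halfspace_le] by blast
  qed
  show "sublevel G t = \<Union>?P"
  proof
    show "sublevel G t \<subseteq> \<Union>?P"
    proof
      fix x assume x: "x \<in> sublevel G t"
      obtain C where C: "C \<in> \<C>" "x \<in> C" using cov by blast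
      then show "x \<in> \<Union>?P" using x ab by (force simp: sublevel_def)
    qed
    show "\<Union>?P \<subseteq> sublevel G t" using ab by (force simp: sublevel_def)
  qed
qed

lemma main_bound:
  fixes U A :: "'a::euclidean_space set"
  assumes P: "finite \<P>" "\<forall>Q\<in>\<P>. convex Q \<and> closed Q" "U = \<Union>\<P>"
    and Q: "finite \<Q>" "\<forall>Q\<in>\<Q>. convex Q \<and> closed Q" "A = \<Union>\<Q>"
    and AU: "A \<subseteq> U"
  shows "enat (nat \<bar>int (card (components A)) - int (card (components U))\<bar>)
         \<le> total_rel_hrank (subtopology euclidean U) A"
proof -
  let ?X = "subtopology euclidean U"
  have cU: "components U = path_components_of ?X" "finite (path_components_of ?X)"
    using union_convex_components[of \<P>] P by auto
  have sub: "subtopology ?X A = subtopology euclidean A"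
    using AU by (simp add: subtopology_subtopology Int_absorb1)
  have cA: "components A = path_components_of (subtopology ?X A)" "finite (path_components_of (subtopology ?X A))"
    using union_convex_components[of \<Q>] Q sub by auto
  have H0: "enat (card (components U) - card (components A)) \<le> group_rank (relative_homology_group (int 0) ?X A)"
    using H0_bound[OF cU(2) cA(2)] cU cA by simp
  have H1: "enat (card (components A) - card (components U)) \<le> group_rank (relative_homology_group (int 1) ?X A)"
    using H1_bound[OF cU(2) cA(2)] cU cA by simp
  have sum2: "(\<Sum>p<2. group_rank (relative_homology_group (int p) ?X A))
      = group_rank (relative_homology_group (int 0) ?X A) + group_rank (relative_homology_group (int 1) ?X A)"
    by (simp add: numeral_2_eq_2)
  have tot: "(\<Sum>p<2. group_rank (relative_homology_group (int p) ?X A)) \<le> total_rel_hrank ?X A"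
    unfolding total_rel_hrank_def by (rule SUP_upper) simp
  let ?r0 = "group_rank (relative_homology_group (int 0) ?X A)"
  let ?r1 = "group_rank (relative_homology_group (int 1) ?X A)"
  have tot2: "?r0 + ?r1 \<le> total_rel_hrank ?X A" using tot sum2 by simp
  have r1: "?r1 \<le> total_rel_hrank ?X A"
  proof -
    have "?r1 \<le> ?r0 + ?r1" by (rule add_increasing) simp_all
    then show ?thesis using tot2 by (rule order_trans)
  qed
  have r0: "?r0 \<le> total_rel_hrank ?X A"
  proof -
    have "?r0 \<le> ?r0 + ?r1" by (rule add_increasing2) simp_all
    then show ?thesis using tot2 by (rule order_trans)
  qed
  show ?thesis
  proof (cases "card (components A) \<ge> card (components U)")
    case True
    then have "nat \<bar>int (card (components A)) - int (card (components U))\<bar> = card (components A) - card (components U)"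
      by linarith
    then have "enat (nat \<bar>int (card (components A)) - int (card (components U))\<bar>) \<le> ?r1"
      using H1 by (simp only:)
    then show ?thesis using r1 by (rule order_trans)
  next
    case False
    then have "nat \<bar>int (card (components A)) - int (card (components U))\<bar> = card (components U) - card (components A)"
      by linarith
    then have "enat (nat \<bar>int (card (components A)) - int (card (components U))\<bar>) \<le> ?r0"
      using H0 by (simp only:)
    then show ?thesis using r0 by (rule order_trans)
  qed
qed

theorem theorem1p5:
  fixes F :: "'a::euclidean_space \<Rightarrow> real" and \<C> :: "'a set set" and M :: real
  assumes "PL_wrt F \<C>"
    and "M > 0"
    and "\<forall>C\<in>\<C>. flat_cell F C \<longrightarrow> F ` C \<subseteq> {-M..M}"
  shows "enat (nat \<bar>int (card (components (sublevel F (-M)))) - int (card (components (sublevel F M)))\<bar>)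
           \<le> total_rel_hrank (subtopology euclidean (sublevel F M)) (sublevel F (-M))
         \<and> enat (nat \<bar>int (card (components (superlevel F M))) - int (card (components (superlevel F (-M))))\<bar>)
           \<le> total_rel_hrank (subtopology euclidean (superlevel F (-M))) (superlevel F M)"
proof -
  have PL: "finite \<C>" "\<forall>C\<in>\<C>. polyhedron C" "\<Union>\<C> = UNIV" "\<forall>C\<in>\<C>. \<exists>a b. \<forall>x\<in>C. F x = a \<bullet> x + b"
    using assms(1) by (auto simp: PL_wrt_def polyhedral_complex_def)
  obtain a b where ab: "\<forall>C\<in>\<C>. \<forall>x\<in>C. F x = a C \<bullet> x + b C"
    using PL(4) by metis
  have ab': "\<forall>C\<in>\<C>. \<forall>x\<in>C. (\<lambda>x. - F x) x = (- a C) \<bullet> x + (- b C)"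
    using ab by simp
  have subF: "\<exists>\<P>. finite \<P> \<and> (\<forall>Q\<in>\<P>. convex Q \<and> closed Q) \<and> sublevel F t = \<Union>\<P>" for t
    by (rule sub_union[OF PL(1,2,3) ab])
  have supF: "\<exists>\<P>. finite \<P> \<and> (\<forall>Q\<in>\<P>. convex Q \<and> closed Q) \<and> superlevel F t = \<Union>\<P>" for t
  proof -
    have "superlevel F t = sublevel (\<lambda>x. - F x) (- t)" by (auto simp: sublevel_def superlevel_def)
    then show ?thesis using sub_union[OF PL(1,2,3) ab', of "- t"] by simp
  qed
  have i: "enat (nat \<bar>int (card (components (sublevel F (-M)))) - int (card (components (sublevel F M)))\<bar>)
           \<le> total_rel_hrank (subtopology euclidean (sublevel F M)) (sublevel F (-M))"
  proof -
    obtain \<P> where P: "finite \<P>" "\<forall>Q\<in>\<P>. convex Q \<and> closed Q" "sublevel F M = \<Union>\<P>" using subF[of M] by blast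
    obtain \<Q> where Q: "finite \<Q>" "\<forall>Q\<in>\<Q>. convex Q \<and> closed Q" "sublevel F (-M) = \<Union>\<Q>" using subF[of "-M"] by blast
    have "sublevel F (-M) \<subseteq> sublevel F M" using assms(2) by (auto simp: sublevel_def)
    then show ?thesis by (rule main_bound[OF P Q])
  qed
  have ii: "enat (nat \<bar>int (card (components (superlevel F M))) - int (card (components (superlevel F (-M))))\<bar>)
           \<le> total_rel_hrank (subtopology euclidean (superlevel F (-M))) (superlevel F M)"
  proof -
    obtain \<P> where P: "finite \<P>" "\<forall>Q\<in>\<P>. convex Q \<and> closed Q" "superlevel F (-M) = \<Union>\<P>" using supF[of "-M"] by blast
    obtain \<Q> where Q: "finite \<Q>" "\<forall>Q\<in>\<Q>. convex Q \<and> closed Q" "superlevel F M = \<Union>\<Q>" using supF[of M] by blast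
    have "superlevel F M \<subseteq> superlevel F (-M)" using assms(2) by (auto simp: superlevel_def)
    then show ?thesis by (rule main_bound[OF P Q])
  qed
  show ?thesis using i ii by blast
qed

end
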